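(* Let $\psi$ be an existential formula in the first-order language with equality over one binary relation symbol $R$, using only the variables $x,y,z$. Let $v:\{x,y,z\}\to Q$ and $w:\{x,y,z\}\to P$ be alike assignments. If $(Q,T)\models\psi[v]$ then $(P,Z)\models\psi[w]$.
   Context: $(P,Z)$: $P=\{0,1,2,3,4\}$, $Z=\{(i,j): i<5,\ j\equiv i\pm1 \pmod 5\}$. $(Q,T)$: $Q=\{0,1,2,3\}$, $T=\{(i,j): i<4,\ j\equiv i\pm1 \pmod 4\}$. An existential formula is one built from atomic formulas ($Ruv$ or $u=v$) and negations of atomic formulas using only conjunction, disjunction and existential quantification; "using only the variables $x,y,z$" means every variable occurring, free or bound, is among $x,y,z$. Assignments $v$ into $Q$ and $w$ into $P$ are alike if the map sending $v(u)\mapsto w(u)$ for $u\in\{x,y,z\}$ is a well-defined bijection from the range of $v$ onto the range of $w$ which is an isomorphism between the induced substructures of $(Q,T)$ and $(P,Z)$ on these ranges. *)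

theory Defs
  imports Main
begin

datatype var = Vx | Vy | Vz

datatype efm =
    Rel var var
  | Eq var var
  | NRel var var
  | NEq var var
  | Conj efm efm
  | Disj efm efm
  | Ex var efm

fun sat :: "'a set \<Rightarrow> ('a \<Rightarrow> 'a \<Rightarrow> bool) \<Rightarrow> efm \<Rightarrow> (var \<Rightarrow> 'a) \<Rightarrow> bool" where
  "sat D R (Rel u u') v = R (v u) (v u')"
| "sat D R (Eq u u') v = (v u = v u')"
| "sat D R (NRel u u') v = (\<not> R (v u) (v u'))"
| "sat D R (NEq u u') v = (v u \<noteq> v u')"
| "sat D R (Conj a b) v = (sat D R a v \<and> sat D R b v)"
| "sat D R (Disj a b) v = (sat D R a v \<or> sat D R b v)"
| "sat D R (Ex u a) v = (\<exists>d\<in>D. sat D R a (v(u := d)))"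

definition P :: "nat set" where "P = {0,1,2,3,4}"
definition Zr :: "nat \<Rightarrow> nat \<Rightarrow> bool" where
  "Zr i j \<longleftrightarrow> i < 5 \<and> j < 5 \<and> (j mod 5 = (i + 1) mod 5 \<or> (j + 1) mod 5 = i mod 5)"

definition Q :: "nat set" where "Q = {0,1,2,3}"
definition Tr :: "nat \<Rightarrow> nat \<Rightarrow> bool" where
  "Tr i j \<longleftrightarrow> i < 4 \<and> j < 4 \<and> (j mod 4 = (i + 1) mod 4 \<or> (j + 1) mod 4 = i mod 4)"

definition alike :: "(var \<Rightarrow> nat) \<Rightarrow> (var \<Rightarrow> nat) \<Rightarrow> bool" where
  "alike v w \<longleftrightarrow> (\<exists>f. (\<forall>u. f (v u) = w u) \<and> bij_betw f (range v) (range w) \<and>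
     (\<forall>a\<in>range v. \<forall>b\<in>range v. Tr a b \<longleftrightarrow> Zr (f a) (f b)))"

end

theory Submission
  imports Defs
begin

definition alk :: "(var \<Rightarrow> nat) \<Rightarrow> (var \<Rightarrow> nat) \<Rightarrow> bool" where
  "alk v w \<longleftrightarrow> (\<forall>u u'. (v u = v u' \<longleftrightarrow> w u = w u') \<and> (Tr (v u) (v u') \<longleftrightarrow> Zr (w u) (w u')))"

lemma alike_alk: "alike v w \<Longrightarrow> alk v w"
  unfolding alike_def alk_def bij_betw_def inj_on_def by (metis rangeI)

lemma Tr_sym: "Tr a b = Tr b a" unfolding Tr_def by auto
lemma Zr_sym: "Zr a b = Zr b a" unfolding Zr_def by auto
lemma Tr_irr: "\<not> Tr a a" unfolding Tr_def by (cases "a = 3") auto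
lemma Zr_irr: "\<not> Zr a a" unfolding Zr_def by (cases "a = 4") auto

lemma ext_lemma:
  "\<forall>a\<in>{0,1,2,3::nat}. \<forall>b\<in>{0,1,2,3::nat}. \<forall>a'\<in>{0,1,2,3,4::nat}. \<forall>b'\<in>{0,1,2,3,4::nat}.
    (a = b \<longleftrightarrow> a' = b') \<longrightarrow> (Tr a b \<longleftrightarrow> Zr a' b') \<longrightarrow>
    (\<forall>d\<in>{0,1,2,3}. \<exists>e\<in>{0,1,2,3,4}. (d = a \<longleftrightarrow> e = a') \<and> (d = b \<longleftrightarrow> e = b') \<and>
       (Tr d a \<longleftrightarrow> Zr e a') \<and> (Tr d b \<longleftrightarrow> Zr e b'))"
  by (simp add: Tr_def Zr_def)

lemma ext:
  assumes "alk v w" "\<forall>u. v u \<in> Q" "\<forall>u. w u \<in> P" "d \<in> Q"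
  shows "\<exists>e\<in>P. alk (v(u:=d)) (w(u:=e))"
proof -
  obtain u1 u2 where u: "u1 \<noteq> u" "u2 \<noteq> u" "\<forall>x. x = u \<or> x = u1 \<or> x = u2"
    by (cases u) (metis var.exhaust var.distinct)+
  have ab: "v u1 = v u2 \<longleftrightarrow> w u1 = w u2" "Tr (v u1) (v u2) \<longleftrightarrow> Zr (w u1) (w u2)"
    using assms(1) unfolding alk_def by auto
  obtain e where e: "e \<in> P" "(d = v u1 \<longleftrightarrow> e = w u1)" "(d = v u2 \<longleftrightarrow> e = w u2)"
       "(Tr d (v u1) \<longleftrightarrow> Zr e (w u1))" "(Tr d (v u2) \<longleftrightarrow> Zr e (w u2))"
    using ext_lemma[rule_format, OF _ _ _ _ ab, of d] assms(2,3,4)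
    unfolding P_def Q_def by blast
  have "alk (v(u:=d)) (w(u:=e))"
    unfolding alk_def
  proof (intro allI)
    fix x y
    show "((v(u := d)) x = (v(u := d)) y \<longleftrightarrow> (w(u := e)) x = (w(u := e)) y) \<and>
        (Tr ((v(u := d)) x) ((v(u := d)) y) \<longleftrightarrow> Zr ((w(u := e)) x) ((w(u := e)) y))"
      using u(3)[rule_format, of x] u(3)[rule_format, of y] u(1,2) e assms(1)
      unfolding alk_def by (auto simp: Tr_irr Zr_irr Tr_sym[of d] Zr_sym[of e])
  qed
  then show ?thesis using e(1) by blast
qed

lemma main: "sat Q Tr \<psi> v \<Longrightarrow> alk v w \<Longrightarrow> \<forall>u. v u \<in> Q \<Longrightarrow> \<forall>u. w u \<in> P \<Longrightarrow> sat P Zr \<psi> w"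
proof (induction \<psi> arbitrary: v w)
  case (Ex u a)
  then obtain d where d: "d \<in> Q" "sat Q Tr a (v(u:=d))" by auto
  then obtain e where e: "e \<in> P" "alk (v(u:=d)) (w(u:=e))" using ext Ex.prems by blast
  have r1: "\<forall>x. (v(u:=d)) x \<in> Q" "\<forall>x. (w(u:=e)) x \<in> P" using d e Ex.prems by auto
  have "sat P Zr a (w(u:=e))"
    using Ex.IH[OF d(2) e(2) r1] .
  then show ?case using e by auto
qed (auto simp: alk_def)

theorem mainTheorem4:
  fixes \<psi> :: efm and v w :: "var \<Rightarrow> nat"
  assumes "\<forall>u. v u \<in> Q" and "\<forall>u. w u \<in> P"
    and "alike v w"
    and "sat Q Tr \<psi> v"
  shows "sat P Zr \<psi> w"
  using main[OF assms(4) alike_alk[OF assms(3)] assms(1,2)] .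

end
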